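(* Let $n\ge3$. For every $\varepsilon>0$ there exists a lens $L=B(a,1)\cap B(b,1)\subseteq\mathbb R^n$ (with nonempty interior) such that the Steiner symmetral $S_{e_n}(L)$ has a smooth boundary point at which the sectional curvature in some direction is smaller than $\varepsilon$. Consequently, by scaling, for every $\kappa>0$ there is an intersection of two Euclidean balls of radius $1/\kappa$ (so all its sectional curvatures are at least $\kappa$) whose Steiner symmetral in direction $e_n$ is not in $\mathcal S_n$.
   Context: For $a\in\mathbb R^n$, $B(a,1)$ is the closed Euclidean unit ball centered at $a$; a lens is an intersection of two such balls. $\mathcal S_n$ is the class of all intersections of families of closed Euclidean unit balls in $\mathbb R^n$. For a boundary point locally given as the graph of a $C^2$ function $H$ over $e_n^\perp\cong\mathbb R^{n-1}$ at $x$, the sectional curvature in direction $e_1$ is $\frac{|(\nabla^2H(x))_{1,1}|}{\sqrt{1+\|\nabla H(x)\|^2}\,(1+\langle e_1,\nabla H(x)\rangle^2)}$. For a compact convex set $K$ and $u\in S^{n-1}$, for each $x$ in the projection $P_{u^\perp}(K)$ write $K\cap(x+\mathbb Ru)=[x+a(x)u,x+b(x)u]$; the Steiner symmetral is $S_u(K)=\{x+yu: x\in P_{u^\perp}(K),\ |y|\le |b(x)-a(x)|/2\}$. *)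

theory Defs
  imports "HOL-Analysis.Analysis"
begin

text \<open>Ambient space R^n is modelled as (real^'m) \<times> real with n = CARD('m) + 1;
  the last factor is the e_n direction and real^'m is e_n^\<bottom>.  The product
  norm is the Euclidean norm, so cball is the Euclidean ball.\<close>

definition class_S :: "((real^'m) \<times> real) set set" where
  "class_S = {K. \<exists>F. K = \<Inter> ((\<lambda>a. cball a 1) ` F)}"

definition steiner_en :: "((real^'m) \<times> real) set \<Rightarrow> ((real^'m) \<times> real) set" where
  "steiner_en K = {(x, y). x \<in> fst ` K \<and>
      \<bar>y\<bar> \<le> \<bar>Sup {t. (x, t) \<in> K} - Inf {t. (x, t) \<in> K}\<bar> / 2}"

definition C2_on_with ::
  "(real^'m \<Rightarrow> real) \<Rightarrow> (real^'m) set \<Rightarrow> (real^'m \<Rightarrow> real^'m) \<Rightarrow> (real^'m \<Rightarrow> real^'m^'m) \<Rightarrow> bool" where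
  "C2_on_with H U G D \<longleftrightarrow> open U \<and>
     (\<forall>y\<in>U. (H has_derivative (\<lambda>h. G y \<bullet> h)) (at y)) \<and>
     (\<forall>y\<in>U. (G has_derivative (\<lambda>h. D y *v h)) (at y)) \<and>
     continuous_on U D"

text \<open>p is a smooth boundary point of K at which the sectional curvature in the
  coordinate direction i of e_n^\<bottom> is smaller than \<epsilon>: near p the boundary of K is
  the graph of a C^2 function H over e_n^\<bottom>, p = (x, H x).\<close>
definition smooth_bdry_small_curv ::
  "((real^'m) \<times> real) set \<Rightarrow> ((real^'m) \<times> real) \<Rightarrow> real \<Rightarrow> bool" where
  "smooth_bdry_small_curv K p \<epsilon> \<longleftrightarrow> p \<in> frontier K \<and>
     (\<exists>H U G D W i. C2_on_with H U G D \<and> fst p \<in> U \<and> snd p = H (fst p) \<and>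
        open W \<and> p \<in> W \<and> frontier K \<inter> W = (\<lambda>y. (y, H y)) ` U \<inter> W \<and>
        \<bar>D (fst p) $ i $ i\<bar> /
          (sqrt (1 + (norm (G (fst p)))\<^sup>2) * (1 + (axis i 1 \<bullet> G (fst p))\<^sup>2)) < \<epsilon>)"

end

theory Submission
  imports Defs
begin


lemma psi_deriv:
  fixes H :: "real^'m \<Rightarrow> real"
  assumes C2: "C2_on_with H U G D" and y: "x0 + s *\<^sub>R v \<in> U"
  shows "((\<lambda>s. (norm (x0 + s *\<^sub>R v - ah))\<^sup>2 + (H (x0 + s *\<^sub>R v) - az)\<^sup>2) has_real_derivative
     (2 * ((x0 + s *\<^sub>R v - ah) \<bullet> v) + 2 * (H (x0 + s *\<^sub>R v) - az) * (G (x0 + s *\<^sub>R v) \<bullet> v))) (at s)"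
proof -
  have dH: "(H has_derivative (\<lambda>h. G (x0 + s *\<^sub>R v) \<bullet> h)) (at (x0 + s *\<^sub>R v))"
    using C2 y unfolding C2_on_with_def by blast
  have dl: "((\<lambda>s. x0 + s *\<^sub>R v) has_derivative (\<lambda>h. h *\<^sub>R v)) (at s)"
    by (auto intro!: derivative_eq_intros)
  have dHl: "((\<lambda>s. H (x0 + s *\<^sub>R v)) has_derivative (\<lambda>h. G (x0 + s *\<^sub>R v) \<bullet> (h *\<^sub>R v))) (at s)"
    using has_derivative_compose[OF dl dH] by simp
  have n: "\<And>s. (norm (x0 + s *\<^sub>R v - ah))\<^sup>2 = (x0 + s *\<^sub>R v - ah) \<bullet> (x0 + s *\<^sub>R v - ah)"
    by (simp add: power2_norm_eq_inner)
  show ?thesis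
    unfolding n has_field_derivative_def
    apply (rule derivative_eq_intros dHl dl | simp)+
    apply (rule ext) apply (simp add: inner_commute algebra_simps)
    done
qed

lemma psi2_deriv:
  fixes H :: "real^'m \<Rightarrow> real"
  assumes C2: "C2_on_with H U G D" and y: "x0 + s *\<^sub>R v \<in> U"
  shows "((\<lambda>s. 2 * ((x0 + s *\<^sub>R v - ah) \<bullet> v) + 2 * (H (x0 + s *\<^sub>R v) - az) * (G (x0 + s *\<^sub>R v) \<bullet> v)) has_real_derivative
     (2 * (v \<bullet> v) + 2 * (G (x0 + s *\<^sub>R v) \<bullet> v)\<^sup>2 + 2 * (H (x0 + s *\<^sub>R v) - az) * ((D (x0 + s *\<^sub>R v) *v v) \<bullet> v))) (at s)"
proof -
  have dH: "(H has_derivative (\<lambda>h. G (x0 + s *\<^sub>R v) \<bullet> h)) (at (x0 + s *\<^sub>R v))"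
    using C2 y unfolding C2_on_with_def by blast
  have dG: "(G has_derivative (\<lambda>h. D (x0 + s *\<^sub>R v) *v h)) (at (x0 + s *\<^sub>R v))"
    using C2 y unfolding C2_on_with_def by blast
  have dl: "((\<lambda>s. x0 + s *\<^sub>R v) has_derivative (\<lambda>h. h *\<^sub>R v)) (at s)"
    by (auto intro!: derivative_eq_intros)
  have dHl: "((\<lambda>s. H (x0 + s *\<^sub>R v)) has_derivative (\<lambda>h. G (x0 + s *\<^sub>R v) \<bullet> (h *\<^sub>R v))) (at s)"
    using has_derivative_compose[OF dl dH] by simp
  have dGl: "((\<lambda>s. G (x0 + s *\<^sub>R v)) has_derivative (\<lambda>h. D (x0 + s *\<^sub>R v) *v (h *\<^sub>R v))) (at s)"
    using has_derivative_compose[OF dl dG] by simp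
  show ?thesis
    unfolding has_field_derivative_def
    apply (rule derivative_eq_intros dHl dl dGl | simp)+
    apply (rule ext) apply (simp add: inner_commute algebra_simps power2_eq_square)
    done
qed
lemma second_deriv_max:
  fixes f f' :: "real \<Rightarrow> real"
  assumes d: "d > 0" and df: "\<And>s. \<bar>s\<bar> < d \<Longrightarrow> (f has_real_derivative f' s) (at s)"
    and d2: "(f' has_real_derivative c) (at 0)"
    and mx: "\<And>s. \<bar>s\<bar> < d \<Longrightarrow> f s \<le> f 0"
  shows "c \<le> 0"
proof (rule ccontr)
  assume "\<not> c \<le> 0" hence c: "c > 0" by simp
  have f0: "f' 0 = 0"
    using DERIV_local_max[OF df[of 0] d] mx d by auto
  obtain e where e: "e > 0" "\<And>h. h > 0 \<Longrightarrow> h < e \<Longrightarrow> f' 0 < f' (0 + h)"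
    using DERIV_pos_inc_right[OF d2 c] by blast
  define b where "b = min d e / 2"
  have b: "0 < b" "b < d" "b < e" using d e(1) by (auto simp: b_def)
  obtain z where z: "0 < z" "z < b" "f b - f 0 = (b - 0) * f' z"
    using MVT2[of 0 b f f'] b df by force
  have "f' z > 0" using e(2)[of z] z b f0 by simp
  hence "b * f' z > 0" using b(1) by (simp add: mult_pos_pos)
  hence "f b > f 0" using z by simp
  moreover have "f b \<le> f 0" using mx[of b] b by simp
  ultimately show False by simp
qed
lemma support_ball:
  fixes K :: "((real^'m) \<times> real) set"
  assumes KS: "K \<in> class_S" and p: "p \<in> frontier K"
  shows "\<exists>a. K \<subseteq> cball a 1 \<and> dist a p = 1"
proof -
  obtain F where K: "K = \<Inter> ((\<lambda>a. cball a 1) ` F)" using KS unfolding class_S_def by blast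
  have cl: "closed K" unfolding K by (auto intro!: closed_Inter)
  have pK: "p \<in> K" using p frontier_subset_closed[OF cl] by blast
  have "\<forall>n. \<exists>a. a \<in> F \<and> (\<exists>z. dist p z < inverse (real (Suc n)) \<and> dist a z > 1)"
  proof
    fix n
    obtain z where z: "z \<notin> K" "dist p z < inverse (real (Suc n))"
      using p unfolding frontier_straddle by (metis inverse_positive_iff_positive of_nat_0_less_iff zero_less_Suc)
    then obtain a where "a \<in> F" "dist a z > 1" unfolding K by (auto simp: mem_cball not_le)
    thus "\<exists>a. a \<in> F \<and> (\<exists>z. dist p z < inverse (real (Suc n)) \<and> dist a z > 1)" using z by blast
  qed
  then obtain A where A: "\<And>n. A n \<in> F" "\<And>n. \<exists>z. dist p z < inverse (real (Suc n)) \<and> dist (A n) z > 1"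
    by metis
  have AK: "\<And>n k. k \<in> K \<Longrightarrow> dist (A n) k \<le> 1" using A(1) unfolding K by (auto simp: mem_cball)
  have Ab: "\<And>n. dist (A n) p > 1 - inverse (real (Suc n))"
  proof -
    fix n
    obtain z where z: "dist p z < inverse (real (Suc n))" "dist (A n) z > 1" using A(2) by blast
    have "dist (A n) z \<le> dist (A n) p + dist p z" by (rule dist_triangle)
    thus "dist (A n) p > 1 - inverse (real (Suc n))" using z by linarith
  qed
  have Ac: "\<And>n. A n \<in> cball p 1" using AK[OF pK] by (simp add: mem_cball dist_commute)
  obtain l r where l: "l \<in> cball p 1" "strict_mono r" "(A \<circ> r) \<longlonglongrightarrow> l"
    using seq_compactE[OF compact_imp_seq_compact[OF compact_cball], of A p 1] Ac by metis
  have lim: "\<And>k. (\<lambda>n. dist (A (r n)) k) \<longlonglongrightarrow> dist l k"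
    using l(3) by (auto intro!: tendsto_intros simp: o_def)
  have sub: "K \<subseteq> cball l 1"
  proof
    fix k assume k: "k \<in> K"
    have "dist l k \<le> 1" by (rule LIMSEQ_le_const2[OF lim]) (use AK[OF k] in auto)
    thus "k \<in> cball l 1" by (simp add: mem_cball)
  qed
  have up: "dist l p \<le> 1" using sub pK by (auto simp: mem_cball)
  have lo: "1 \<le> dist l p"
  proof (rule LIMSEQ_le[OF _ lim])
    show "(\<lambda>n. 1 - inverse (real (Suc n))) \<longlonglongrightarrow> 1"
      using tendsto_diff[OF tendsto_const LIMSEQ_inverse_real_of_nat, of 1] by simp
    show "\<exists>N. \<forall>n\<ge>N. 1 - inverse (real (Suc n)) \<le> dist (A (r n)) p"
    proof (intro exI allI impI)
      fix n
      have "n \<le> r n" using seq_suble[OF l(2)] by simp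
      hence "inverse (real (Suc (r n))) \<le> inverse (real (Suc n))"
        by (simp add: le_imp_inverse_le)
      thus "1 - inverse (real (Suc n)) \<le> dist (A (r n)) p" using Ab[of "r n"] by linarith
    qed
  qed
  show ?thesis using sub up lo by (intro exI[of _ l]) auto
qed
lemma class_S_curv:
  fixes K :: "((real^'m) \<times> real) set"
  assumes KS: "K \<in> class_S" and sb: "smooth_bdry_small_curv K p \<epsilon>"
  shows "1 < \<epsilon>"
proof -
  have pf: "p \<in> frontier K" using sb unfolding smooth_bdry_small_curv_def by blast
  obtain H U G D W i where C2: "C2_on_with H U G D" and x0U: "fst p \<in> U" and pH: "snd p = H (fst p)"
    and W: "open W" "p \<in> W" and fr: "frontier K \<inter> W = (\<lambda>y. (y, H y)) ` U \<inter> W"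
    and rat: "\<bar>D (fst p) $ i $ i\<bar> /
          (sqrt (1 + (norm (G (fst p)))\<^sup>2) * (1 + (axis i 1 \<bullet> G (fst p))\<^sup>2)) < \<epsilon>"
    using sb unfolding smooth_bdry_small_curv_def by blast
  obtain a where aK: "K \<subseteq> cball a 1" and ap: "dist a p = 1" using support_ball[OF KS pf] by blast
  have cl: "closed K" using KS unfolding class_S_def by (auto intro!: closed_Inter)
  define x0 where "x0 = fst p"
  define ah where "ah = fst a"
  define az where "az = snd a"
  have p_eq: "p = (x0, H x0)" using pH unfolding x0_def by (cases p) auto
  have a_eq: "a = (ah, az)" unfolding ah_def az_def by simp
  have x0U': "x0 \<in> U" using x0U unfolding x0_def .
  have pW': "(x0, H x0) \<in> W" using W(2) p_eq by simp
  have UU: "open U" using C2 unfolding C2_on_with_def by blast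
  define psi where "psi = (\<lambda>v s. (norm (x0 + s *\<^sub>R v - ah))\<^sup>2 + (H (x0 + s *\<^sub>R v) - az)\<^sup>2)"
  have psi0: "\<And>v. psi v 0 = 1"
  proof -
    fix v
    have "sqrt ((dist ah x0)\<^sup>2 + (dist az (H x0))\<^sup>2) = 1" using ap unfolding p_eq a_eq dist_Pair_Pair .
    hence "(dist ah x0)\<^sup>2 + (dist az (H x0))\<^sup>2 = 1" using real_sqrt_eq_1_iff by blast
    thus "psi v 0 = 1" unfolding psi_def by (simp add: dist_norm norm_minus_commute power2_commute)
  qed
  have loc: "\<exists>d>0. \<forall>s. \<bar>s\<bar> < d \<longrightarrow> x0 + s *\<^sub>R v \<in> U \<and> psi v s \<le> 1" for v
  proof -
    have Hc: "isCont H x0" using C2 x0U' unfolding C2_on_with_def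
      by (meson has_derivative_continuous)
    have l: "isCont (\<lambda>s. x0 + s *\<^sub>R v) 0" by (intro continuous_intros)
    have "isCont (\<lambda>s. H (x0 + s *\<^sub>R v)) 0" by (rule isCont_o2[OF l]) (simp add: Hc)
    hence gc: "isCont (\<lambda>s. (x0 + s *\<^sub>R v, H (x0 + s *\<^sub>R v))) 0"
      by (intro continuous_intros l)
    have op: "open (W \<inter> (U \<times> UNIV))" using W(1) UU by (intro open_Int open_Times) auto
    have pin: "(x0 + 0 *\<^sub>R v, H (x0 + 0 *\<^sub>R v)) \<in> W \<inter> (U \<times> UNIV)" using pW' x0U' by simp
    have "eventually (\<lambda>s. (x0 + s *\<^sub>R v, H (x0 + s *\<^sub>R v)) \<in> W \<inter> (U \<times> UNIV)) (at 0)"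
      using gc op pin unfolding isCont_def by (rule topological_tendstoD)
    then obtain d where d0: "d > 0" and d1: "\<And>s. s \<noteq> 0 \<Longrightarrow> dist s 0 < d \<Longrightarrow> (x0 + s *\<^sub>R v, H (x0 + s *\<^sub>R v)) \<in> W \<inter> (U \<times> UNIV)"
      unfolding eventually_at by blast
    have d: "d > 0" "\<And>s. dist s 0 < d \<Longrightarrow> (x0 + s *\<^sub>R v, H (x0 + s *\<^sub>R v)) \<in> W \<inter> (U \<times> UNIV)"
    proof -
      show "d > 0" by (rule d0)
      fix s :: real assume "dist s 0 < d"
      thus "(x0 + s *\<^sub>R v, H (x0 + s *\<^sub>R v)) \<in> W \<inter> (U \<times> UNIV)"
        using d1[of s] pin by (cases "s = 0") auto
    qed
    show ?thesis
    proof (intro exI[of _ d] conjI allI impI d(1))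
      fix s :: real assume s: "\<bar>s\<bar> < d"
      have m: "(x0 + s *\<^sub>R v, H (x0 + s *\<^sub>R v)) \<in> W \<inter> (U \<times> UNIV)" using d(2)[of s] s by simp
      thus "x0 + s *\<^sub>R v \<in> U" by simp
      hence "(x0 + s *\<^sub>R v, H (x0 + s *\<^sub>R v)) \<in> frontier K" using fr m by blast
      hence "(x0 + s *\<^sub>R v, H (x0 + s *\<^sub>R v)) \<in> cball a 1"
        using frontier_subset_closed[OF cl] aK by blast
      hence "sqrt ((dist ah (x0 + s *\<^sub>R v))\<^sup>2 + (dist az (H (x0 + s *\<^sub>R v)))\<^sup>2) \<le> 1"
        unfolding mem_cball a_eq dist_Pair_Pair .
      hence "(dist ah (x0 + s *\<^sub>R v))\<^sup>2 + (dist az (H (x0 + s *\<^sub>R v)))\<^sup>2 \<le> 1"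
        using real_sqrt_le_1_iff by blast
      thus "psi v s \<le> 1" unfolding psi_def by (simp add: dist_norm norm_minus_commute power2_commute)
    qed
  qed
  define lam where "lam = H x0 - az"
  define g where "g = G x0"
  define u where "u = x0 - ah"
  have first: "u \<bullet> v + lam * (g \<bullet> v) = 0" for v
  proof -
    obtain d where d: "d > 0" "\<And>s. \<bar>s\<bar> < d \<Longrightarrow> x0 + s *\<^sub>R v \<in> U \<and> psi v s \<le> 1" using loc[of v] by blast
    have "(psi v has_real_derivative
       (2 * ((x0 + 0 *\<^sub>R v - ah) \<bullet> v) + 2 * (H (x0 + 0 *\<^sub>R v) - az) * (G (x0 + 0 *\<^sub>R v) \<bullet> v))) (at 0)"
      unfolding psi_def by (rule psi_deriv[OF C2]) (use x0U' in simp)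
    hence "2 * ((x0 + 0 *\<^sub>R v - ah) \<bullet> v) + 2 * (H (x0 + 0 *\<^sub>R v) - az) * (G (x0 + 0 *\<^sub>R v) \<bullet> v) = 0"
      by (rule DERIV_local_max[OF _ d(1)]) (use d(2) psi0 in auto)
    thus ?thesis unfolding u_def lam_def g_def by (simp add: algebra_simps)
  qed
  have ueq: "u = - lam *\<^sub>R g"
  proof -
    have "(u + lam *\<^sub>R g) \<bullet> (u + lam *\<^sub>R g) = 0"
      using first[of "u + lam *\<^sub>R g"] by (simp add: inner_add_right inner_commute) (simp add: algebra_simps)
    thus ?thesis by (simp add: eq_neg_iff_add_eq_0)
  qed
  have nrm: "lam\<^sup>2 * (1 + (norm g)\<^sup>2) = 1"
  proof -
    have "(norm u)\<^sup>2 + lam\<^sup>2 = 1" using psi0[of 0] unfolding psi_def u_def lam_def by simp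
    thus ?thesis unfolding ueq by (simp add: power_mult_distrib algebra_simps)
  qed
  define e where "e = (axis i 1 :: real^'m)"
  have second: "2 * (e \<bullet> e) + 2 * (G x0 \<bullet> e)\<^sup>2 + 2 * (H x0 - az) * ((D x0 *v e) \<bullet> e) \<le> 0"
  proof -
    obtain d where d: "d > 0" "\<And>s. \<bar>s\<bar> < d \<Longrightarrow> x0 + s *\<^sub>R e \<in> U \<and> psi e s \<le> 1" using loc[of e] by blast
    have "((\<lambda>s. 2 * ((x0 + s *\<^sub>R e - ah) \<bullet> e) + 2 * (H (x0 + s *\<^sub>R e) - az) * (G (x0 + s *\<^sub>R e) \<bullet> e)) has_real_derivative
     (2 * (e \<bullet> e) + 2 * (G (x0 + 0 *\<^sub>R e) \<bullet> e)\<^sup>2 + 2 * (H (x0 + 0 *\<^sub>R e) - az) * ((D (x0 + 0 *\<^sub>R e) *v e) \<bullet> e))) (at 0)"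
      by (rule psi2_deriv[OF C2]) (use x0U' in simp)
    note dd = this
    have "2 * (e \<bullet> e) + 2 * (G (x0 + 0 *\<^sub>R e) \<bullet> e)\<^sup>2 + 2 * (H (x0 + 0 *\<^sub>R e) - az) * ((D (x0 + 0 *\<^sub>R e) *v e) \<bullet> e) \<le> 0"
      apply (rule second_deriv_max[OF d(1) _ dd, where f="psi e"])
      subgoal for s unfolding psi_def by (rule psi_deriv[OF C2]) (use d(2) in blast)
      using d(2) psi0 by auto
    thus ?thesis by simp
  qed
  have ee: "e \<bullet> e = 1" unfolding e_def by (simp add: inner_axis_axis)
  have Ge: "G x0 \<bullet> e = g $ i" unfolding e_def g_def by (simp add: inner_axis)
  have De: "(D x0 *v e) \<bullet> e = D x0 $ i $ i" unfolding e_def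
    by (simp add: inner_axis matrix_vector_mult_basis column_def)
  have sec2: "lam * D x0 $ i $ i \<le> - (1 + (g $ i)\<^sup>2)"
    using second unfolding ee Ge De lam_def[symmetric] by simp
  define Q where "Q = 1 + (g $ i)\<^sup>2"
  have Q: "Q > 0" unfolding Q_def by (simp add: add_pos_nonneg)
  have lam0: "lam \<noteq> 0" using nrm by auto
  have sq: "sqrt (1 + (norm g)\<^sup>2) = 1 / \<bar>lam\<bar>"
  proof -
    have "1 + (norm g)\<^sup>2 = (1 / \<bar>lam\<bar>)\<^sup>2" using nrm lam0 by (simp add: field_simps power2_abs)
    thus ?thesis by simp
  qed
  have "\<bar>lam * D x0 $ i $ i\<bar> \<ge> Q" using sec2 abs_ge_minus_self[of "lam * D x0 $ i $ i"] unfolding Q_def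
    by linarith
  hence "\<bar>lam\<bar> * \<bar>D x0 $ i $ i\<bar> \<ge> Q" by (simp add: abs_mult)
  hence "\<bar>D x0 $ i $ i\<bar> / (sqrt (1 + (norm g)\<^sup>2) * Q) \<ge> 1"
    unfolding sq using Q lam0 by (simp add: field_simps)
  moreover have "axis i 1 \<bullet> G (fst p) = g $ i" unfolding g_def x0_def by (simp add: inner_axis')
  ultimately show ?thesis using rat unfolding Q_def g_def x0_def by simp
qed


definition outer :: "real^'m \<Rightarrow> real^'m^'m" where
  "outer u = (\<chi> k l. u $ k * u $ l)"

lemma outer_mult: "outer u *v h = (u \<bullet> h) *\<^sub>R u"
  by (simp add: vec_eq_iff outer_def matrix_vector_mult_def inner_vec_def sum_distrib_left mult.commute mult.left_commute)

lemma outer_cont[continuous_intros]: "continuous_on S f \<Longrightarrow> continuous_on S (\<lambda>x. outer (f x))"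
  unfolding outer_def by (intro continuous_intros)

lemma pair_ineq:
  fixes c x :: "real^'m" and R s y :: real
  assumes R: "R > 0"
  shows "(norm (x - c))\<^sup>2 + (y - s)\<^sup>2 \<le> R\<^sup>2 \<longleftrightarrow> norm (x - c) \<le> R \<and> \<bar>y - s\<bar> \<le> sqrt (R\<^sup>2 - (norm (x - c))\<^sup>2)"
  proof
    assume h: "(norm (x - c))\<^sup>2 + (y - s)\<^sup>2 \<le> R\<^sup>2"
    have "(norm (x - c))\<^sup>2 \<le> R\<^sup>2" using h zero_le_power2[of "y - s"] by linarith
    hence "norm (x - c) \<le> R" by (rule power2_le_imp_le) (use R in linarith)
    moreover have "sqrt ((y - s)\<^sup>2) \<le> sqrt (R\<^sup>2 - (norm (x - c))\<^sup>2)" using h by (intro real_sqrt_le_mono) linarith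
    ultimately show "norm (x - c) \<le> R \<and> \<bar>y - s\<bar> \<le> sqrt (R\<^sup>2 - (norm (x - c))\<^sup>2)" by simp
  next
    assume h: "norm (x - c) \<le> R \<and> \<bar>y - s\<bar> \<le> sqrt (R\<^sup>2 - (norm (x - c))\<^sup>2)"
    have nn: "0 \<le> R\<^sup>2 - (norm (x - c))\<^sup>2" using power_mono[OF conjunct1[OF h] norm_ge_zero, of 2] by simp
    have "\<bar>y - s\<bar>\<^sup>2 \<le> (sqrt (R\<^sup>2 - (norm (x - c))\<^sup>2))\<^sup>2" using h by (intro power_mono) auto
    thus "(norm (x - c))\<^sup>2 + (y - s)\<^sup>2 \<le> R\<^sup>2" using nn by simp
  qed
lemma pair_sqrt: "0 < R \<Longrightarrow> sqrt ((norm (x - c))\<^sup>2 + (y - s)\<^sup>2) \<le> R \<longleftrightarrow> (norm (x - c))\<^sup>2 + (y - s)\<^sup>2 \<le> (R::real)\<^sup>2"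
proof
  assume "0 < R" "sqrt ((norm (x - c))\<^sup>2 + (y - s)\<^sup>2) \<le> R"
  thus "(norm (x - c))\<^sup>2 + (y - s)\<^sup>2 \<le> R\<^sup>2" using sqrt_le_D by blast
next
  assume "0 < R" "(norm (x - c))\<^sup>2 + (y - s)\<^sup>2 \<le> R\<^sup>2"
  thus "sqrt ((norm (x - c))\<^sup>2 + (y - s)\<^sup>2) \<le> R" by (intro real_le_lsqrt) auto
qed

lemma mem_cball_pair:
  fixes c x :: "real^'m" and R s y :: real
  assumes R: "R > 0"
  shows "(x, y) \<in> cball (c, s) R \<longleftrightarrow> norm (x - c) \<le> R \<and> \<bar>y - s\<bar> \<le> sqrt (R\<^sup>2 - (norm (x - c))\<^sup>2)"
proof -
  have "(x, y) \<in> cball (c, s) R \<longleftrightarrow> sqrt ((norm (x - c))\<^sup>2 + (y - s)\<^sup>2) \<le> R"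
    by (simp add: mem_cball dist_norm norm_Pair norm_minus_commute power2_commute)
  also have "\<dots> \<longleftrightarrow> (norm (x - c))\<^sup>2 + (y - s)\<^sup>2 \<le> R\<^sup>2" by (rule pair_sqrt[OF R])
  also have "\<dots> \<longleftrightarrow> norm (x - c) \<le> R \<and> \<bar>y - s\<bar> \<le> sqrt (R\<^sup>2 - (norm (x - c))\<^sup>2)" by (rule pair_ineq[OF R])
  finally show ?thesis .
qed

lemma rho_deriv:
  fixes c x :: "real^'m"
  assumes "norm (x - c) < R"
  shows "((\<lambda>x. sqrt (R\<^sup>2 - (norm (x - c))\<^sup>2)) has_derivative
          (\<lambda>h. - (((x - c) \<bullet> h) / sqrt (R\<^sup>2 - (norm (x - c))\<^sup>2)))) (at x)"
proof -
  have pos: "0 < R\<^sup>2 - (norm (x - c))\<^sup>2" using assms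
    by (smt (verit) norm_ge_zero power_strict_mono zero_less_numeral)
  have d: "((\<lambda>x::real^'m. x - c) has_derivative (\<lambda>h. h)) (at x)"
    by (rule derivative_eq_intros refl)+ simp
  have "((\<lambda>x::real^'m. (x - c) \<bullet> (x - c)) has_derivative (\<lambda>h. (x - c) \<bullet> h + h \<bullet> (x - c))) (at x)"
    by (rule has_derivative_inner[OF d d])
  hence "((\<lambda>x::real^'m. R\<^sup>2 - (x - c) \<bullet> (x - c)) has_derivative (\<lambda>h. 0 - ((x - c) \<bullet> h + h \<bullet> (x - c)))) (at x)"
    by (intro has_derivative_diff has_derivative_const)
  hence d1: "((\<lambda>x::real^'m. R\<^sup>2 - (norm (x - c))\<^sup>2) has_derivative (\<lambda>h. - (2 * ((x - c) \<bullet> h)))) (at x)"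
    by (simp add: inner_commute power2_norm_eq_inner)
  have "((\<lambda>x. sqrt (R\<^sup>2 - (norm (x - c))\<^sup>2)) has_derivative
      (\<lambda>h. - (2 * ((x - c) \<bullet> h)) * (inverse (sqrt (R\<^sup>2 - (norm (x - c))\<^sup>2)) / 2))) (at x)"
    by (rule has_derivative_real_sqrt[OF pos d1])
  thus ?thesis by (simp add: divide_simps)
qed
lemma phi_deriv:
  fixes c x :: "real^'m"
  assumes "norm (x - c) < R"
  shows "((\<lambda>x. inverse (sqrt (R\<^sup>2 - (norm (x - c))\<^sup>2)) *\<^sub>R (x - c)) has_derivative
          (\<lambda>h. inverse (sqrt (R\<^sup>2 - (norm (x - c))\<^sup>2)) *\<^sub>R h +
               (((x - c) \<bullet> h) / (sqrt (R\<^sup>2 - (norm (x - c))\<^sup>2))^3) *\<^sub>R (x - c))) (at x)"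
proof -
  define r where "r = sqrt (R\<^sup>2 - (norm (x - c))\<^sup>2)"
  have pos: "0 < R\<^sup>2 - (norm (x - c))\<^sup>2" using assms
    by (smt (verit) norm_ge_zero power_strict_mono zero_less_numeral)
  have r0: "r > 0" unfolding r_def using pos by simp
  have d: "((\<lambda>x::real^'m. x - c) has_derivative (\<lambda>h. h)) (at x)"
    by (rule derivative_eq_intros refl)+ simp
  have di: "((\<lambda>x. inverse (sqrt (R\<^sup>2 - (norm (x - c))\<^sup>2))) has_derivative
     (\<lambda>h. - (inverse r * (- (((x - c) \<bullet> h) / r)) * inverse r))) (at x)"
    using Deriv.has_derivative_inverse[OF _ rho_deriv[OF assms]] r0 unfolding r_def by simp
  have "((\<lambda>x. inverse (sqrt (R\<^sup>2 - (norm (x - c))\<^sup>2)) *\<^sub>R (x - c)) has_derivative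
     (\<lambda>h. inverse r *\<^sub>R h + (- (inverse r * (- (((x - c) \<bullet> h) / r)) * inverse r)) *\<^sub>R (x - c))) (at x)"
    using has_derivative_scaleR[OF di d] unfolding r_def by simp
  thus ?thesis unfolding r_def[symmetric]
    by (simp add: power3_eq_cube field_simps)
qed

lemma sqrt_less_R: "0 < R \<Longrightarrow> X < R\<^sup>2 \<Longrightarrow> sqrt X < (R::real)"
  by (metis abs_of_pos real_sqrt_abs real_sqrt_less_mono)

lemma Dform: "(- (1/2) *\<^sub>R ((a1 *\<^sub>R mat 1 + b1 *\<^sub>R outer u1) + (a2 *\<^sub>R mat 1 + b2 *\<^sub>R outer u2))) *v (h::real^'m)
   = - (1/2) *\<^sub>R ((a1 *\<^sub>R h + (b1 * (u1 \<bullet> h)) *\<^sub>R u1) + (a2 *\<^sub>R h + (b2 * (u2 \<bullet> h)) *\<^sub>R u2))"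
  by (simp only: scaleR_minus_left[symmetric] scaleR_matrix_vector_assoc[symmetric]
      matrix_vector_mult_add_rdistrib outer_mult matrix_vector_mul_lid) simp

lemma construction:
  fixes R \<epsilon> :: real
  assumes R: "R > 0" and eps: "\<epsilon> > 0" and card: "CARD('m) \<ge> 2"
  shows "\<exists>(a::(real^'m) \<times> real) b. interior (cball a R \<inter> cball b R) \<noteq> {} \<and>
          (\<exists>p. smooth_bdry_small_curv (steiner_en (cball a R \<inter> cball b R)) p \<epsilon>)"
proof -
  obtain i j :: 'm where ij: "i \<noteq> j"
  proof -
    have "\<not> (\<forall>i j::'m. i = j)"
    proof
      assume h: "\<forall>i j::'m. i = j"
      then have "(UNIV::'m set) = {undefined}" by auto
      hence "CARD('m) = 1" by (auto simp: card_1_singleton_iff)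
      thus False using card by simp
    qed
    thus ?thesis using that by blast
  qed
  define t where "t = min (R/2) (R\<^sup>2 * \<epsilon> / 32)"
  have t0: "t > 0" and tR: "t \<le> R/2" and te: "t \<le> R\<^sup>2 * \<epsilon> / 32" using R eps by (auto simp: t_def)
  define r2 where "r2 = t^3 / R\<^sup>2"
  have r20: "r2 > 0" using t0 R by (simp add: r2_def)
  have r2t: "r2 \<le> t / 4"
  proof -
    have "t\<^sup>2 \<le> (R/2)\<^sup>2" using tR t0 by (intro power_mono) auto
    hence "t^3 \<le> t * R\<^sup>2 / 4" using t0 by (simp add: power2_eq_square power3_eq_cube field_simps)
    thus ?thesis unfolding r2_def using R by (simp add: field_simps)
  qed
  define \<alpha> where "\<alpha> = sqrt (R\<^sup>2 - t\<^sup>2)"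
  define \<gamma> where "\<gamma> = sqrt (R\<^sup>2 - r2\<^sup>2)"
  have tR2: "t\<^sup>2 < R\<^sup>2" using tR t0 R by (intro power_strict_mono) auto
  have r2R2: "r2\<^sup>2 < R\<^sup>2" using r2t tR r20 R by (intro power_strict_mono) auto
  have \<alpha>0: "\<alpha> \<ge> 0" and \<alpha>2: "\<alpha>\<^sup>2 = R\<^sup>2 - t\<^sup>2" using tR2 by (auto simp: \<alpha>_def)
  have \<gamma>0: "\<gamma> \<ge> 0" and \<gamma>2: "\<gamma>\<^sup>2 = R\<^sup>2 - r2\<^sup>2" using r2R2 by (auto simp: \<gamma>_def)
  define e where "e = (axis i 1 :: real^'m)"
  define w where "w = (axis j 1 :: real^'m)"
  define c1 where "c1 = - (\<alpha> *\<^sub>R e)"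
  define c2 where "c2 = - (\<gamma> *\<^sub>R w)"
  define \<rho>1 where "\<rho>1 = (\<lambda>x. sqrt (R\<^sup>2 - (norm (x - c1))\<^sup>2))"
  define \<rho>2 where "\<rho>2 = (\<lambda>x. sqrt (R\<^sup>2 - (norm (x - c2))\<^sup>2))"
  define K where "K = cball (c1, t) R \<inter> cball (c2, 0::real) R"
  define g where "g = (\<lambda>x. (\<rho>1 x + \<rho>2 x - t) / 2)"
  define U where "U = {x. norm (x - c1) < R \<and> norm (x - c2) < R \<and> \<bar>\<rho>1 x - \<rho>2 x\<bar> < t \<and> t < \<rho>1 x + \<rho>2 x}"
  define W :: "((real^'m) \<times> real) set" where "W = U \<times> {0<..}"
  define G where "G = (\<lambda>x. - (1/2) *\<^sub>R (inverse (\<rho>1 x) *\<^sub>R (x - c1) + inverse (\<rho>2 x) *\<^sub>R (x - c2)))"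
  define D where "D = (\<lambda>x. - (1/2) *\<^sub>R ((inverse (\<rho>1 x) *\<^sub>R mat 1 + (1 / (\<rho>1 x)^3) *\<^sub>R outer (x - c1))
       + (inverse (\<rho>2 x) *\<^sub>R mat 1 + (1 / (\<rho>2 x)^3) *\<^sub>R outer (x - c2))))"
  define S where "S = steiner_en K"
  have c\<rho>1: "continuous_on UNIV \<rho>1" unfolding \<rho>1_def by (intro continuous_intros)
  have c\<rho>2: "continuous_on UNIV \<rho>2" unfolding \<rho>2_def by (intro continuous_intros)
  have cg: "continuous_on UNIV g" unfolding g_def by (auto intro!: continuous_intros c\<rho>1 c\<rho>2)
  have openU: "open U" unfolding U_def
    by (intro open_Collect_conj open_Collect_less continuous_intros c\<rho>1 c\<rho>2)
  have \<rho>pos1: "x \<in> U \<Longrightarrow> \<rho>1 x > 0" for x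
    unfolding U_def \<rho>1_def by (auto intro!: power_strict_mono)
  have \<rho>pos2: "x \<in> U \<Longrightarrow> \<rho>2 x > 0" for x
    unfolding U_def \<rho>2_def by (auto intro!: power_strict_mono)
  have gpos: "x \<in> U \<Longrightarrow> g x > 0" for x unfolding U_def g_def by auto
  have chord: "(x, y) \<in> K \<longleftrightarrow> t - \<rho>1 x \<le> y \<and> y \<le> \<rho>2 x" if x: "x \<in> U" for x y
  proof -
    have e1: "(x, y) \<in> K \<longleftrightarrow> (norm (x - c1) \<le> R \<and> \<bar>y - t\<bar> \<le> \<rho>1 x) \<and> (norm (x - c2) \<le> R \<and> \<bar>y - 0\<bar> \<le> \<rho>2 x)"
      unfolding K_def Int_iff mem_cball_pair[OF R] \<rho>1_def \<rho>2_def ..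
    have "(x, y) \<in> K \<longleftrightarrow> \<bar>y - t\<bar> \<le> \<rho>1 x \<and> \<bar>y - 0\<bar> \<le> \<rho>2 x"
      unfolding e1 using x by (auto simp: U_def)
    also have "\<dots> \<longleftrightarrow> t - \<rho>1 x \<le> y \<and> y \<le> \<rho>2 x"
      using x unfolding U_def by (auto simp: abs_le_iff abs_less_iff)
    finally show ?thesis .
  qed
  have stein: "(x, y) \<in> S \<longleftrightarrow> \<bar>y\<bar> \<le> g x" if x: "x \<in> U" for x y
  proof -
    have set: "{s. (x, s) \<in> K} = {t - \<rho>1 x .. \<rho>2 x}"
    proof (rule set_eqI)
      fix s show "s \<in> {s. (x, s) \<in> K} \<longleftrightarrow> s \<in> {t - \<rho>1 x .. \<rho>2 x}"
        using chord[OF x, of s] by simp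
    qed
    have le: "t - \<rho>1 x \<le> \<rho>2 x" using x unfolding U_def by simp
    have "(x, \<rho>2 x) \<in> K" using chord[OF x, of "\<rho>2 x"] le by simp
    hence fx: "x \<in> fst ` K" by (metis fst_conv image_eqI)
    have "\<bar>Sup {s. (x, s) \<in> K} - Inf {s. (x, s) \<in> K}\<bar> / 2 = g x"
      unfolding set using le by (simp add: g_def)
    thus ?thesis unfolding S_def steiner_en_def using fx by simp
  qed
  have \<alpha>R: "\<alpha> < R" unfolding \<alpha>_def using R t0 by (intro sqrt_less_R) auto
  have \<gamma>R: "\<gamma> < R" unfolding \<gamma>_def using R r20 by (intro sqrt_less_R) auto
  have n1: "norm (0 - c1) = \<alpha>" unfolding c1_def e_def using \<alpha>0 by simp
  have n2: "norm (0 - c2) = \<gamma>" unfolding c2_def w_def using \<gamma>0 by simp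
  have \<rho>10: "\<rho>1 0 = t" unfolding \<rho>1_def n1 \<alpha>2 using t0 by simp
  have \<rho>20: "\<rho>2 0 = r2" unfolding \<rho>2_def n2 \<gamma>2 using r20 by simp
  have U0: "0 \<in> U" unfolding U_def using n1 n2 \<rho>10 \<rho>20 \<alpha>R \<gamma>R r20 r2t t0 by auto
  have g0: "g 0 = r2 / 2" unfolding g_def \<rho>10 \<rho>20 by simp
  have cgf: "continuous_on UNIV (\<lambda>z::(real^'m)\<times>real. g (fst z))"
    by (rule continuous_on_compose2[OF cg]) (auto intro: continuous_intros)
  have UT: "{z::(real^'m)\<times>real. fst z \<in> U} = U \<times> UNIV" by auto
  have oUT: "open {z::(real^'m)\<times>real. fst z \<in> U}" unfolding UT by (intro open_Times openU open_UNIV)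
  have V1o: "open {z::(real^'m)\<times>real. fst z \<in> U \<and> \<bar>snd z\<bar> < g (fst z)}"
    by (intro open_Collect_conj oUT open_Collect_less cgf continuous_intros)
  have V2o: "open {z::(real^'m)\<times>real. fst z \<in> U \<and> g (fst z) < snd z}"
    by (intro open_Collect_conj oUT open_Collect_less cgf continuous_intros)
  have fr: "frontier S \<inter> W = (\<lambda>y. (y, g y)) ` U \<inter> W"
  proof (rule set_eqI, rule iffI)
    fix z assume z: "z \<in> frontier S \<inter> W"
    obtain x y where zxy: "z = (x, y)" by (cases z)
    have xU: "x \<in> U" and y0: "y > 0" using z zxy W_def by auto
    have "y = g x"
    proof (rule ccontr)
      assume "y \<noteq> g x"
      then consider "y < g x" | "y > g x" by linarith
      thus False
      proof cases
        case 1
        let ?V = "{z::(real^'m)\<times>real. fst z \<in> U \<and> \<bar>snd z\<bar> < g (fst z)}"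
        have sub: "?V \<subseteq> S"
        proof
          fix u assume u: "u \<in> ?V"
          obtain a b where "u = (a, b)" by (cases u)
          thus "u \<in> S" using u stein[of a b] by auto
        qed
        have "z \<in> ?V" using 1 y0 xU zxy by simp
        hence "z \<in> interior S" using interior_maximal[OF sub V1o] by blast
        thus False using z unfolding frontier_def by blast
      next
        case 2
        let ?V = "{z::(real^'m)\<times>real. fst z \<in> U \<and> g (fst z) < snd z}"
        have "?V \<inter> S = {}"
        proof (rule ccontr)
          assume "?V \<inter> S \<noteq> {}"
          then obtain u where u: "u \<in> ?V" "u \<in> S" by blast
          obtain a b where "u = (a, b)" by (cases u)
          thus False using u stein[of a b] by auto
        qed
        hence "?V \<inter> closure S = {}" using open_Int_closure_eq_empty[OF V2o] by blast
        moreover have "z \<in> ?V" using 2 xU zxy by simp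
        ultimately show False using z unfolding frontier_def by blast
      qed
    qed
    thus "z \<in> (\<lambda>y. (y, g y)) ` U \<inter> W" using z zxy xU by auto
  next
    fix z assume z: "z \<in> (\<lambda>y. (y, g y)) ` U \<inter> W"
    then obtain x where xU: "x \<in> U" and zx: "z = (x, g x)" by auto
    have gx: "g x > 0" using gpos[OF xU] .
    have "z \<in> frontier S" unfolding frontier_straddle
    proof (intro allI impI conjI)
      fix \<delta> :: real assume \<delta>: "\<delta> > 0"
      have "z \<in> S" unfolding zx using stein[OF xU, of "g x"] gx by simp
      thus "\<exists>u\<in>S. dist z u < \<delta>" using \<delta> by (intro bexI[of _ z]) auto
      have "(x, g x + \<delta>/2) \<notin> S" using stein[OF xU, of "g x + \<delta>/2"] gx \<delta> by simp
      moreover have "dist z (x, g x + \<delta>/2) < \<delta>" unfolding zx dist_Pair_Pair using \<delta> by (simp add: dist_real_def)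
      ultimately show "\<exists>u. u \<notin> S \<and> dist z u < \<delta>" by blast
    qed
    thus "z \<in> frontier S \<inter> W" using z by blast
  qed
  have C2: "C2_on_with g U G D"
    unfolding C2_on_with_def
  proof (intro conjI ballI openU)
    fix y assume y: "y \<in> U"
    have n1y: "norm (y - c1) < R" and n2y: "norm (y - c2) < R" using y unfolding U_def by auto
    have r1: "\<rho>1 y > 0" and r2: "\<rho>2 y > 0" using \<rho>pos1[OF y] \<rho>pos2[OF y] .
    have d1: "(\<rho>1 has_derivative (\<lambda>h. - (((y - c1) \<bullet> h) / \<rho>1 y))) (at y)"
      unfolding \<rho>1_def by (rule rho_deriv[OF n1y])
    have d2: "(\<rho>2 has_derivative (\<lambda>h. - (((y - c2) \<bullet> h) / \<rho>2 y))) (at y)"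
      unfolding \<rho>2_def by (rule rho_deriv[OF n2y])
    have dd: "((\<lambda>x. \<rho>1 x + \<rho>2 x - t) has_derivative
        (\<lambda>h. (- (((y - c1) \<bullet> h) / \<rho>1 y)) + (- (((y - c2) \<bullet> h) / \<rho>2 y)) - 0)) (at y)"
      by (intro has_derivative_diff has_derivative_add d1 d2 has_derivative_const)
    have "((\<lambda>x. (\<rho>1 x + \<rho>2 x - t) / 2) has_derivative
        (\<lambda>h. - (\<rho>1 y + \<rho>2 y - t) * (inverse 2 * 0 * inverse 2) +
             ((- (((y - c1) \<bullet> h) / \<rho>1 y)) + (- (((y - c2) \<bullet> h) / \<rho>2 y)) - 0) / 2)) (at y)"
      by (rule Deriv.has_derivative_divide[OF dd has_derivative_const]) simp
    moreover have "(\<lambda>h. - (\<rho>1 y + \<rho>2 y - t) * (inverse 2 * 0 * inverse 2) +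
             ((- (((y - c1) \<bullet> h) / \<rho>1 y)) + (- (((y - c2) \<bullet> h) / \<rho>2 y)) - 0) / 2) = (\<lambda>h. G y \<bullet> h)"
    proof (rule ext)
      fix h
      define A where "A = (y - c1) \<bullet> h"
      define B where "B = (y - c2) \<bullet> h"
      have "G y \<bullet> h = - (1/2) * (inverse (\<rho>1 y) * A + inverse (\<rho>2 y) * B)"
        unfolding G_def A_def B_def by (simp only: inner_add_left inner_scaleR_left inner_minus_left)
      thus "- (\<rho>1 y + \<rho>2 y - t) * (inverse 2 * 0 * inverse 2) +
             ((- (((y - c1) \<bullet> h) / \<rho>1 y)) + (- (((y - c2) \<bullet> h) / \<rho>2 y)) - 0) / 2 = G y \<bullet> h"
        unfolding A_def[symmetric] B_def[symmetric] by (simp add: field_simps)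
    qed
    ultimately show "(g has_derivative (\<lambda>h. G y \<bullet> h)) (at y)" unfolding g_def by simp
    have p1: "((\<lambda>x. inverse (\<rho>1 x) *\<^sub>R (x - c1)) has_derivative
       (\<lambda>h. inverse (\<rho>1 y) *\<^sub>R h + (((y - c1) \<bullet> h) / (\<rho>1 y)^3) *\<^sub>R (y - c1))) (at y)"
      unfolding \<rho>1_def by (rule phi_deriv[OF n1y])
    have p2: "((\<lambda>x. inverse (\<rho>2 x) *\<^sub>R (x - c2)) has_derivative
       (\<lambda>h. inverse (\<rho>2 y) *\<^sub>R h + (((y - c2) \<bullet> h) / (\<rho>2 y)^3) *\<^sub>R (y - c2))) (at y)"
      unfolding \<rho>2_def by (rule phi_deriv[OF n2y])
    have "(G has_derivative (\<lambda>h. - (1/2) *\<^sub>R ((inverse (\<rho>1 y) *\<^sub>R h + (((y - c1) \<bullet> h) / (\<rho>1 y)^3) *\<^sub>R (y - c1))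
         + (inverse (\<rho>2 y) *\<^sub>R h + (((y - c2) \<bullet> h) / (\<rho>2 y)^3) *\<^sub>R (y - c2))))) (at y)"
      unfolding G_def by (intro has_derivative_scaleR_right has_derivative_add p1 p2)
    moreover have "(\<lambda>h. - (1/2) *\<^sub>R ((inverse (\<rho>1 y) *\<^sub>R h + (((y - c1) \<bullet> h) / (\<rho>1 y)^3) *\<^sub>R (y - c1))
         + (inverse (\<rho>2 y) *\<^sub>R h + (((y - c2) \<bullet> h) / (\<rho>2 y)^3) *\<^sub>R (y - c2)))) = (\<lambda>h. D y *v h)"
      by (rule ext) (unfold D_def Dform, simp)
    ultimately show "(G has_derivative (\<lambda>h. D y *v h)) (at y)" by simp
  next
    have "\<forall>x\<in>U. \<rho>1 x \<noteq> 0" "\<forall>x\<in>U. \<rho>2 x \<noteq> 0" using \<rho>pos1 \<rho>pos2 by force+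
    thus "continuous_on U D" unfolding D_def
      by (auto intro!: continuous_intros continuous_on_subset[OF c\<rho>1] continuous_on_subset[OF c\<rho>2])
  qed
  have ax: "e $ i = 1" "e $ j = 0" "w $ i = 0" "w $ j = 1"
    unfolding e_def w_def using ij by (auto simp: axis_def)
  have u1: "0 - c1 = \<alpha> *\<^sub>R e" and u2: "0 - c2 = \<gamma> *\<^sub>R w" unfolding c1_def c2_def by simp_all
  have Dii: "D 0 $ i $ i = - (1/2) * ((inverse t + (1/t^3) * \<alpha>\<^sup>2) + (inverse r2 + 0))"
    unfolding D_def \<rho>10 \<rho>20 u1 u2 by (simp add: outer_def mat_def ax power2_eq_square)
  have Gj: "G 0 $ j = - (1/2) * (\<gamma> / r2)"
    unfolding G_def \<rho>10 \<rho>20 u1 u2 by (simp add: ax field_simps)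
  have Gi: "axis i 1 \<bullet> G 0 = - (1/2) * (\<alpha> / t)"
    unfolding inner_axis' G_def \<rho>10 \<rho>20 u1 u2 by (simp add: ax field_simps)
  have Dabs: "\<bar>D 0 $ i $ i\<bar> = R\<^sup>2 / t^3"
  proof -
    have "inverse t + (1/t^3) * \<alpha>\<^sup>2 + inverse r2 = 2 * R\<^sup>2 / t^3"
      unfolding \<alpha>2 r2_def using t0 R by (simp add: field_simps power2_eq_square power3_eq_cube)
    thus ?thesis unfolding Dii using t0 R by simp
  qed
  define Q where "Q = 1 + (axis i 1 \<bullet> G 0)\<^sup>2"
  define M where "M = sqrt (1 + (norm (G 0))\<^sup>2)"
  have Qv: "Q = 1 + \<alpha>\<^sup>2 / (4 * t\<^sup>2)" unfolding Q_def Gi by (simp add: power2_eq_square field_simps)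
  have Q0: "Q > 0" unfolding Q_def by (simp add: add_pos_nonneg)
  have Mge: "\<gamma> / (2 * r2) \<le> M"
  proof -
    have "\<gamma> / (2 * r2) = \<bar>G 0 $ j\<bar>" unfolding Gj using \<gamma>0 r20 by simp
    also have "\<dots> \<le> norm (G 0)" by (rule component_le_norm_cart)
    also have "\<dots> \<le> M" unfolding M_def by (rule real_le_rsqrt) simp
    finally show ?thesis .
  qed
  have \<gamma>ge: "R / 2 \<le> \<gamma>"
  proof (rule power2_le_imp_le[OF _ \<gamma>0])
    have "r2 \<le> R / 8" using r2t tR by simp
    hence "r2\<^sup>2 \<le> (R/8)\<^sup>2" using r20 by (intro power_mono) auto
    moreover have "(R/8)\<^sup>2 = R\<^sup>2 / 64" "(R/2)\<^sup>2 = R\<^sup>2 / 4" by (simp_all add: power_divide)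
    moreover have "R\<^sup>2 \<ge> 0" by simp
    ultimately show "(R / 2)\<^sup>2 \<le> \<gamma>\<^sup>2" unfolding \<gamma>2 by linarith
  qed
  have \<alpha>ge: "3 * R\<^sup>2 / 4 \<le> \<alpha>\<^sup>2"
  proof -
    have "t\<^sup>2 \<le> (R/2)\<^sup>2" using tR t0 by (intro power_mono) auto
    thus ?thesis unfolding \<alpha>2 by (simp add: power2_eq_square)
  qed
  have t2: "t\<^sup>2 \<le> R^3 * \<epsilon> / 64"
  proof -
    have "t * t \<le> (R/2) * (R\<^sup>2 * \<epsilon> / 32)" using tR te t0 by (intro mult_mono) auto
    thus ?thesis by (simp add: power2_eq_square power3_eq_cube)
  qed
  have key: "2 < \<epsilon> * \<gamma> * Q"
  proof -
    have "Q * t\<^sup>2 \<ge> \<alpha>\<^sup>2 / 4" unfolding Qv using t0 by (simp add: field_simps)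
    hence Qt: "Q * t\<^sup>2 \<ge> 3 * R\<^sup>2 / 16" using \<alpha>ge by linarith
    have "\<epsilon> * \<gamma> * (Q * t\<^sup>2) \<ge> \<epsilon> * (R/2) * (3 * R\<^sup>2 / 16)"
      using eps \<gamma>ge Qt R by (intro mult_mono) auto
    hence "\<epsilon> * \<gamma> * Q * t\<^sup>2 \<ge> 3 * \<epsilon> * R^3 / 32" by (simp add: power2_eq_square power3_eq_cube mult.assoc)
    also have "3 * \<epsilon> * R^3 / 32 \<ge> 6 * t\<^sup>2" using t2 eps by (simp add: field_simps)
    finally have "6 * t\<^sup>2 \<le> \<epsilon> * \<gamma> * Q * t\<^sup>2" .
    hence "6 \<le> \<epsilon> * \<gamma> * Q" using t0 by simp
    thus ?thesis by simp
  qed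
  have curv: "\<bar>D 0 $ i $ i\<bar> / (M * Q) < \<epsilon>"
  proof -
    have g2: "\<gamma> / (2 * r2) > 0" using \<gamma>ge R r20 by simp
    have "\<bar>D 0 $ i $ i\<bar> / (M * Q) \<le> \<bar>D 0 $ i $ i\<bar> / ((\<gamma> / (2 * r2)) * Q)"
      using g2 Q0 Mge by (intro divide_left_mono mult_right_mono mult_pos_pos) auto
    also have "\<dots> = 2 / (\<gamma> * Q)" unfolding Dabs r2_def using t0 R \<gamma>ge Q0
      by (simp add: field_simps power2_eq_square power3_eq_cube)
    also have "\<dots> < \<epsilon>" using key \<gamma>ge R Q0 by (simp add: field_simps)
    finally show ?thesis .
  qed
  have intK: "(0, r2/2) \<in> interior K"
  proof -
    have "dist (c1, t) (0::real^'m, r2/2) < R"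
    proof -
      have "dist (c1, t) (0::real^'m, r2/2) = sqrt (\<alpha>\<^sup>2 + (t - r2/2)\<^sup>2)"
        unfolding dist_Pair_Pair using n1 by (simp add: dist_norm dist_real_def)
      also have "\<dots> < R"
      proof (rule sqrt_less_R[OF R])
        have "(t - r2/2)\<^sup>2 < t\<^sup>2" using r20 r2t t0 by (intro power_strict_mono) auto
        thus "\<alpha>\<^sup>2 + (t - r2/2)\<^sup>2 < R\<^sup>2" unfolding \<alpha>2 by simp
      qed
      finally show ?thesis .
    qed
    moreover have "dist (c2, 0) (0::real^'m, r2/2) < R"
    proof -
      have "dist (c2, 0) (0::real^'m, r2/2) = sqrt (\<gamma>\<^sup>2 + (r2/2)\<^sup>2)"
        unfolding dist_Pair_Pair using n2 r20 by (simp add: dist_norm dist_real_def)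
      also have "\<dots> < R"
      proof (rule sqrt_less_R[OF R])
        have "(r2/2)\<^sup>2 < r2\<^sup>2" using r20 by (simp add: power2_eq_square)
        thus "\<gamma>\<^sup>2 + (r2/2)\<^sup>2 < R\<^sup>2" unfolding \<gamma>2 by simp
      qed
      finally show ?thesis .
    qed
    ultimately show ?thesis unfolding K_def interior_Int interior_cball by simp
  qed
  have openW: "open W" unfolding W_def by (intro open_Times openU open_greaterThan)
  have pW: "(0, g 0) \<in> W" unfolding W_def using U0 g0 r20 by simp
  have pfr: "(0, g 0) \<in> frontier S" using fr pW U0 by blast
  have sb: "smooth_bdry_small_curv S (0, g 0) \<epsilon>"
    unfolding smooth_bdry_small_curv_def
  proof (intro conjI pfr exI)
    show "C2_on_with g U G D" by (rule C2)
    show "fst (0::real^'m, g 0) \<in> U" using U0 by simp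
    show "snd (0::real^'m, g 0) = g (fst (0::real^'m, g 0))" by simp
    show "open W" by (rule openW)
    show "(0, g 0) \<in> W" by (rule pW)
    show "frontier S \<inter> W = (\<lambda>y. (y, g y)) ` U \<inter> W" by (rule fr)
    show "\<bar>D (fst (0::real^'m, g 0)) $ i $ i\<bar> /
          (sqrt (1 + (norm (G (fst (0::real^'m, g 0))))\<^sup>2) * (1 + (axis i 1 \<bullet> G (fst (0::real^'m, g 0)))\<^sup>2)) < \<epsilon>"
      using curv unfolding M_def Q_def by simp
  qed
  show ?thesis
    using intK sb unfolding S_def K_def by blast
qed

theorem proposition4p7:
  assumes "CARD('m) \<ge> 2"
  shows "(\<forall>\<epsilon>>0. \<exists>(a::(real^'m) \<times> real) b.
            interior (cball a 1 \<inter> cball b 1) \<noteq> {} \<and>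
            (\<exists>p. smooth_bdry_small_curv (steiner_en (cball a 1 \<inter> cball b 1)) p \<epsilon>)) \<and>
         (\<forall>\<kappa>>0. \<exists>(a::(real^'m) \<times> real) b.
            interior (cball a (1/\<kappa>) \<inter> cball b (1/\<kappa>)) \<noteq> {} \<and>
            steiner_en (cball a (1/\<kappa>) \<inter> cball b (1/\<kappa>)) \<notin> class_S)"
proof (intro conjI allI impI)
  fix \<epsilon> :: real assume e: "\<epsilon> > 0"
  show "\<exists>(a::(real^'m) \<times> real) b.
            interior (cball a 1 \<inter> cball b 1) \<noteq> {} \<and>
            (\<exists>p. smooth_bdry_small_curv (steiner_en (cball a 1 \<inter> cball b 1)) p \<epsilon>)"
    by (rule construction) (use assms e in auto)
next
  fix \<kappa> :: real assume k: "\<kappa> > 0"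
  obtain a b :: "(real^'m) \<times> real" where ab: "interior (cball a (1/\<kappa>) \<inter> cball b (1/\<kappa>)) \<noteq> {}"
    and p: "\<exists>p. smooth_bdry_small_curv (steiner_en (cball a (1/\<kappa>) \<inter> cball b (1/\<kappa>))) p 1"
  proof -
    have "\<exists>(a::(real^'m) \<times> real) b. interior (cball a (1/\<kappa>) \<inter> cball b (1/\<kappa>)) \<noteq> {} \<and>
          (\<exists>p. smooth_bdry_small_curv (steiner_en (cball a (1/\<kappa>) \<inter> cball b (1/\<kappa>))) p 1)"
      by (rule construction) (use assms k in auto)
    thus ?thesis using that by blast
  qed
  have "steiner_en (cball a (1/\<kappa>) \<inter> cball b (1/\<kappa>)) \<notin> class_S"
  proof
    assume "steiner_en (cball a (1/\<kappa>) \<inter> cball b (1/\<kappa>)) \<in> class_S"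
    thus False using p class_S_curv by fastforce
  qed
  thus "\<exists>(a::(real^'m) \<times> real) b.
            interior (cball a (1/\<kappa>) \<inter> cball b (1/\<kappa>)) \<noteq> {} \<and>
            steiner_en (cball a (1/\<kappa>) \<inter> cball b (1/\<kappa>)) \<notin> class_S"
    using ab by blast
qed

end
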